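(* Let $0<q<1$, $\alpha>-1$ and let $n\ge0$ be an integer. The matrix $\big((q^{\alpha+1};q)_{j+k}\big)_{j,k=0}^{n}$ is invertible and \[ \big((q^{\alpha+1};q)_{j+k}\big)_{j,k=0}^{n}{}^{-1}=\left(\sum_{m=0}^{n}\frac{q^{j+k}\,(q^{\alpha+1};q)_m\,(q^{-m};q)_j\,(q^{-m};q)_k}{(q;q)_j\,(q;q)_k\,(q^{\alpha+1};q)_j\,(q^{\alpha+1};q)_k\,(q;q)_m\,q^{(\alpha+1)m}}\right)_{j,k=0}^{n}. \]
   Context: $(a;q)_m=\prod_{i=0}^{m-1}(1-aq^i)$ for integers $m\ge0$ (empty product $=1$); in particular $(q^{-m};q)_j=0$ for $j>m$. *)

theory Defs
  imports "Jordan_Normal_Form.Matrix"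
begin

definition qpoch :: "real \<Rightarrow> real \<Rightarrow> nat \<Rightarrow> real" where
  "qpoch a q m = (\<Prod>i<m. (1 - a * q ^ i))"

end

theory Submission imports Defs "Jordan_Normal_Form.Determinant" begin

lemma qpoch_0[simp]: "qpoch b q 0 = 1" by (simp add: qpoch_def)
lemma qpoch_Suc: "qpoch b q (Suc j) = qpoch b q j * (1 - b*q^j)" by (simp add: qpoch_def)
lemma qpoch_Suc_front: "qpoch b q (Suc j) = (1 - b) * qpoch (b*q) q j"
  unfolding qpoch_def by (subst prod.lessThan_Suc_shift) (simp add: mult.assoc)
lemma qpoch_add: "qpoch b q (j+k) = qpoch b q j * qpoch (b*q^j) q k"
  by (induct k) (simp_all add: qpoch_Suc power_add mult_ac)
lemma qpoch_zero_factor: "i < j \<Longrightarrow> b*q^i = 1 \<Longrightarrow> qpoch b q j = 0"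
  unfolding qpoch_def by (rule prod_zero) auto
lemma qpoch_pos: assumes "0 < b" "b < 1" "0 < q" "q \<le> 1" shows "qpoch b q j > 0"
  unfolding qpoch_def
proof (rule prod_pos)
  fix i assume "i \<in> {..<j}"
  have "q^i \<le> 1" using assms by (simp add: power_le_one)
  hence "b*q^i \<le> b" using assms mult_left_le[of "q^i" b] by simp
  thus "0 < 1 - b*q^i" using assms by linarith
qed

definition xq :: "real \<Rightarrow> nat \<Rightarrow> real" where "xq q m = q powr (- real m)"

lemma xq_mult: "0 < q \<Longrightarrow> xq q m * q^m = 1"
  unfolding xq_def by (simp add: powr_realpow[symmetric] powr_add[symmetric])
lemma xq_Suc: "0 < q \<Longrightarrow> xq q (Suc m) * q = xq q m"
proof -
  assume q: "0 < q"
  have "xq q (Suc m) * q = q powr (- real (Suc m)) * q powr 1" using q by (simp add: xq_def)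
  also have "\<dots> = q powr (- real (Suc m) + 1)" by (rule powr_add[symmetric])
  also have "\<dots> = q powr (- real m)" by simp
  finally show ?thesis by (simp add: xq_def)
qed

lemma e_rec: assumes "0 < q"
  shows "qpoch (xq q (Suc m)) q (Suc j) = qpoch (xq q m) q (Suc j) - xq q (Suc m) * (1 - q^Suc j) * qpoch (xq q m) q j"
proof -
  have X: "xq q m = xq q (Suc m) * q" using xq_Suc[OF assms] by simp
  show ?thesis unfolding qpoch_Suc_front[of "xq q (Suc m)"] qpoch_Suc[of "xq q m"]
    unfolding X by (simp add: algebra_simps)
qed

lemma gen: "(r::real) \<noteq> 0 \<Longrightarrow> D \<noteq> 0 \<Longrightarrow> (A - Y*r*P)/(D*r) * (z*w) = A/(D*r)*(z*w) - Y*z*(P/D*w)"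
  by (simp add: field_simps)

lemma T_lemma: assumes "0 < q" "q < 1"
  shows "(\<Sum>j\<le>m. qpoch (xq q m) q j / qpoch q q j * z^j) = qpoch (z * xq q m) q m"
proof (induct m)
  case 0 thus ?case by simp
next
  case (Suc m)
  let ?e = "\<lambda>m j. qpoch (xq q m) q j / qpoch q q j"
  have pw: "?e (Suc m) (Suc j) * z^Suc j = ?e m (Suc j) * z^Suc j - xq q (Suc m) * z * (?e m j * z^j)" for j
  proof -
    have qS: "qpoch q q (Suc j) = qpoch q q j * (1 - q^Suc j)" by (simp add: qpoch_Suc)
    have "qpoch q q j > 0" using qpoch_pos assms by simp
    moreover have "1 - q^Suc j > 0" using power_Suc_less_one[OF assms, of j] by simp
    ultimately show ?thesis unfolding e_rec[OF assms(1)] qS power_Suc[of z]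
      using gen[of "1 - q^Suc j" "qpoch q q j"] by simp
  qed
  have z: "qpoch (xq q m) q (Suc m) = 0" using qpoch_zero_factor[of m "Suc m" "xq q m" q] xq_mult[OF assms(1)] by simp
  have "(\<Sum>j\<le>Suc m. ?e (Suc m) j * z^j) = 1 + (\<Sum>j\<le>m. ?e (Suc m) (Suc j) * z^(Suc j))"
    by (subst sum.atMost_Suc_shift) simp
  also have "\<dots> = 1 + (\<Sum>j\<le>m. ?e m (Suc j) * z^(Suc j)) - xq q (Suc m) * z * (\<Sum>j\<le>m. ?e m j * z^j)"
    unfolding pw by (simp add: sum_subtractf sum_distrib_left)
  also have "1 + (\<Sum>j\<le>m. ?e m (Suc j) * z^(Suc j)) = (\<Sum>j\<le>Suc m. ?e m j * z^j)"
    by (subst sum.atMost_Suc_shift) simp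
  also have "\<dots> = (\<Sum>j\<le>m. ?e m j * z^j)" using z by simp
  finally have "(\<Sum>j\<le>Suc m. ?e (Suc m) j * z^j) = (1 - xq q (Suc m) * z) * qpoch (z * xq q m) q m"
    using Suc by (simp add: algebra_simps)
  also have "\<dots> = qpoch (z * xq q (Suc m)) q (Suc m)"
    unfolding qpoch_Suc_front using xq_Suc[OF assms(1), of m] by (simp add: mult.assoc)
  finally show ?case .
qed

definition S :: "real \<Rightarrow> real \<Rightarrow> nat \<Rightarrow> nat \<Rightarrow> nat \<Rightarrow> real" where
  "S q a m k i = (\<Sum>j\<le>m. qpoch (xq q m) q j / qpoch q q j * (q^(i+1))^j * qpoch (a*q^j) q k)"

lemma S_0: assumes "0 < q" "q < 1" shows "S q a m 0 i = qpoch (q^(i+1) * xq q m) q m"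
  using T_lemma[OF assms, of m "q^(i+1)"] by (simp add: S_def)

lemma T_zero: assumes "0 < q" "i < m" shows "qpoch (q^(i+1) * xq q m) q m = 0"
proof (rule qpoch_zero_factor[of "m - 1 - i"])
  show "m - 1 - i < m" using assms by simp
  have "q^(i+1) * xq q m * q^(m-1-i) = xq q m * q^(i+1+(m-1-i))" by (simp add: power_add)
  also have "i+1+(m-1-i) = m" using assms by simp
  finally show "q^(i+1) * xq q m * q^(m-1-i) = 1" using xq_mult[OF assms(1)] by simp
qed

lemma T_diag: assumes "0 < q" shows "qpoch (q^(m+1) * xq q m) q m = qpoch q q m"
proof -
  have "q^(m+1) * xq q m = q * (xq q m * q^m)" by (simp add: algebra_simps)
  hence h: "q^(m+1) * xq q m = q" using xq_mult[OF assms, of m] by simp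
  show ?thesis by (simp only: h)
qed

lemma S_rec: "S q a m (Suc k) i = S q a m k i - a*q^k * S q a m k (Suc i)"
proof -
  have "(q^(Suc i+1))^j = q^j * (q^(i+1))^j" for j
    by (simp add: power_mult_distrib[symmetric])
  thus ?thesis unfolding S_def
    by (simp add: qpoch_Suc sum_subtractf sum_distrib_left algebra_simps power_add)
qed

lemma S_vanish: assumes "0 < q" "q < 1" shows "i + k < m \<Longrightarrow> S q a m k i = 0"
proof (induct k arbitrary: i)
  case 0 thus ?case using S_0[OF assms] T_zero[OF assms(1)] by simp
next
  case (Suc k) thus ?case by (simp add: S_rec)
qed

lemma S_diag: assumes "0 < q" "q < 1"
  shows "k \<le> m \<Longrightarrow> S q a m k (m-k) = (\<Prod>t<k. - a*q^t) * qpoch q q m"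
proof (induct k)
  case 0 thus ?case using S_0[OF assms] T_diag[OF assms(1)] by simp
next
  case (Suc k)
  have "S q a m k (m - Suc k) = 0" using S_vanish[OF assms] Suc by simp
  moreover have "Suc (m - Suc k) = m - k" using Suc by simp
  ultimately show ?case using Suc by (simp add: S_rec)
qed

lemma qpoch_rev: "qpoch b q m = (\<Prod>t<m. 1 - b*q^(m-1-t))"
  unfolding qpoch_def
  by (rule prod.reindex_bij_witness[where i="\<lambda>t. m-1-t" and j="\<lambda>t. m-1-t"]) auto

lemma refl_prod: assumes "0 < q" shows "qpoch (xq q m) q m * (\<Prod>t<m. - (q^(t+1))) = qpoch q q m"
proof -
  have "qpoch (xq q m) q m * (\<Prod>t<m. - (q^(t+1))) = (\<Prod>t<m. (1 - xq q m*q^(m-1-t)) * (- (q^(t+1))))"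
    unfolding qpoch_rev[of "xq q m"] by (simp only: prod.distrib)
  also have "\<dots> = (\<Prod>t<m. 1 - q*q^t)"
  proof (rule prod.cong)
    fix t assume "t \<in> {..<m}"
    hence "m-1-t + (t+1) = m" by simp
    hence "xq q m*q^(m-1-t) * q^(t+1) = 1" using xq_mult[OF assms, of m] by (metis mult.assoc power_add)
    thus "(1 - xq q m*q^(m-1-t)) * (- (q^(t+1))) = 1 - q*q^t" by (simp add: algebra_simps)
  qed simp
  finally show ?thesis by (simp add: qpoch_def)
qed

lemma diag_prod: assumes "0 < q"
  shows "q^m * qpoch (xq q m) q m * (\<Prod>t<m. - a*q^t) = a^m * qpoch q q m"
proof -
  have "q^m * (\<Prod>t<m. - a*q^t) = (\<Prod>t<m. q * (- a*q^t))" by (simp only: prod.distrib prod_constant card_lessThan)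
  also have "\<dots> = (\<Prod>t<m. a * (- (q^(t+1))))" by (rule prod.cong) (simp_all add: algebra_simps)
  also have "\<dots> = a^m * (\<Prod>t<m. - (q^(t+1)))" by (simp only: prod.distrib prod_constant card_lessThan)
  finally have "q^m * (\<Prod>t<m. - a*q^t) = a^m * (\<Prod>t<m. - (q^(t+1)))" .
  hence h: "q^m * qpoch (xq q m) q m * (\<Prod>t<m. - a*q^t) = a^m * (qpoch (xq q m) q m * (\<Prod>t<m. - (q^(t+1))))"
    by (metis mult.assoc mult.left_commute)
  show ?thesis by (simp only: h refl_prod[OF assms])
qed

definition w :: "real \<Rightarrow> real \<Rightarrow> nat \<Rightarrow> nat \<Rightarrow> real" where
  "w q a m j = q^j * qpoch (xq q m) q j / (qpoch q q j * qpoch a q j)"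

lemma w_zero: assumes "0 < q" "m < j" shows "w q a m j = 0"
  using qpoch_zero_factor[of m j "xq q m" q] xq_mult[OF assms(1)] assms(2) by (simp add: w_def)

lemma R_lemma: assumes "0 < q" "q < 1" "0 < a" "a < 1" "m < N"
  shows "(\<Sum>j<N. w q a m j * qpoch a q (j+k)) = S q a m k 0"
proof -
  have "(\<Sum>j<N. w q a m j * qpoch a q (j+k)) = (\<Sum>j\<le>m. w q a m j * qpoch a q (j+k))"
    by (rule sum.mono_neutral_right) (use assms w_zero in auto)
  also have "\<dots> = S q a m k 0" unfolding S_def
  proof (rule sum.cong)
    fix j
    have "qpoch a q j > 0" using qpoch_pos assms by simp
    thus "w q a m j * qpoch a q (j+k) = qpoch (xq q m) q j / qpoch q q j * (q^(0+1))^j * qpoch (a*q^j) q k"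
      unfolding w_def qpoch_add by (simp add: field_simps)
  qed simp
  finally show ?thesis .
qed

lemma diag_val: assumes "0 < q" "q < 1" "0 < a" "a < 1"
  shows "S q a m m 0 * w q a m m = a^m * qpoch q q m / qpoch a q m"
proof -
  have "S q a m m 0 = (\<Prod>t<m. - a*q^t) * qpoch q q m" using S_diag[OF assms(1,2), of m m] by simp
  moreover have "qpoch a q m > 0" "qpoch q q m > 0" using qpoch_pos assms by simp_all
  ultimately show ?thesis using diag_prod[OF assms(1), of m a] unfolding w_def
    by (simp add: field_simps)
qed

lemma K_lower: assumes "0 < q" "q < 1" "0 < a" "a < 1" "m < N" "l < m"
  shows "(\<Sum>k\<in>{0..<N}. (\<Sum>j\<in>{0..<N}. w q a m j * qpoch a q (j+k)) * w q a l k) = 0"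
proof -
  have h1: "(\<Sum>j\<in>{0..<N}. w q a m j * qpoch a q (j+k)) = S q a m k 0" for k
    using R_lemma[OF assms(1-5), of k] by (simp add: lessThan_atLeast0)
  have h2: "S q a m k 0 * w q a l k = 0" for k
  proof (cases "k \<le> l")
    case True thus ?thesis using S_vanish[OF assms(1,2), of 0 k m a] assms by simp
  next
    case False thus ?thesis using w_zero[OF assms(1), of l k] by simp
  qed
  show ?thesis unfolding h1 by (rule sum.neutral) (use h2 in blast)
qed

lemma K_swap: "(\<Sum>k\<in>{0..<N}. (\<Sum>j\<in>{0..<N}. w q a m j * qpoch a q (j+k)) * w q a l k)
   = (\<Sum>k\<in>{0..<N}. (\<Sum>j\<in>{0..<N}. w q a l j * qpoch a q (j+k)) * w q a m k)"
proof -
  have "(\<Sum>k\<in>{0..<N}. (\<Sum>j\<in>{0..<N}. w q a m j * qpoch a q (j+k)) * w q a l k)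
     = (\<Sum>k\<in>{0..<N}. \<Sum>j\<in>{0..<N}. w q a m j * qpoch a q (j+k) * w q a l k)"
    by (simp add: sum_distrib_right)
  also have "\<dots> = (\<Sum>j\<in>{0..<N}. \<Sum>k\<in>{0..<N}. w q a m j * qpoch a q (j+k) * w q a l k)"
    by (rule sum.swap)
  also have "\<dots> = (\<Sum>j\<in>{0..<N}. (\<Sum>k\<in>{0..<N}. w q a l k * qpoch a q (k+j)) * w q a m j)"
    by (simp add: sum_distrib_left sum_distrib_right add.commute mult_ac)
  finally show ?thesis .
qed

lemma K_diag: assumes "0 < q" "q < 1" "0 < a" "a < 1" "m < N"
  shows "(\<Sum>k\<in>{0..<N}. (\<Sum>j\<in>{0..<N}. w q a m j * qpoch a q (j+k)) * w q a m k)
     = a^m * qpoch q q m / qpoch a q m"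
proof -
  have "(\<Sum>j\<in>{0..<N}. w q a m j * qpoch a q (j+k)) = S q a m k 0" for k
    using R_lemma[OF assms(1-5), of k] by (simp add: lessThan_atLeast0)
  hence "(\<Sum>k\<in>{0..<N}. (\<Sum>j\<in>{0..<N}. w q a m j * qpoch a q (j+k)) * w q a m k)
      = (\<Sum>k\<in>{0..<N}. S q a m k 0 * w q a m k)" by simp
  also have "\<dots> = (\<Sum>k\<in>{m}. S q a m k 0 * w q a m k)"
  proof (rule sum.mono_neutral_right)
    show "\<forall>k\<in>{0..<N} - {m}. S q a m k 0 * w q a m k = 0"
    proof
      fix k assume k: "k \<in> {0..<N} - {m}"
      show "S q a m k 0 * w q a m k = 0"
      proof (cases "k < m")
        case True thus ?thesis using S_vanish[OF assms(1,2), of 0 k m a] by simp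
      next
        case False hence "m < k" using k by auto
        thus ?thesis using w_zero[OF assms(1), of m k] by simp
      qed
    qed
  qed (use assms in auto)
  also have "\<dots> = a^m * qpoch q q m / qpoch a q m" using diag_val[OF assms(1-4)] by simp
  finally show ?thesis .
qed

lemma K: assumes "0 < q" "q < 1" "0 < a" "a < 1" "m < N" "l < N"
  shows "(\<Sum>k\<in>{0..<N}. (\<Sum>j\<in>{0..<N}. w q a m j * qpoch a q (j+k)) * w q a l k)
     = (if m = l then a^m * qpoch q q m / qpoch a q m else 0)"
proof -
  consider "l < m" | "m < l" | "m = l" by linarith
  thus ?thesis
  proof cases
    case 1 thus ?thesis using K_lower[OF assms(1-5)] by simp
  next
    case 2 thus ?thesis using K_lower[OF assms(1-4,6)] K_swap[where N=N and q=q and a=a and m=m and l=l] by simp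
  next
    case 3 thus ?thesis using K_diag[OF assms(1-5)] by simp
  qed
qed

theorem mainTheorem12:
  fixes q \<alpha> :: real and n :: nat
  assumes "0 < q" "q < 1" "\<alpha> > -1"
  defines "A \<equiv> mat (n+1) (n+1) (\<lambda>(j,k). qpoch (q powr (\<alpha>+1)) q (j+k))"
      and "B \<equiv> mat (n+1) (n+1) (\<lambda>(j,k). \<Sum>m=0..n.
              (q ^ (j+k) * qpoch (q powr (\<alpha>+1)) q m * qpoch (q powr (- real m)) q j
                 * qpoch (q powr (- real m)) q k) /
              (qpoch q q j * qpoch q q k * qpoch (q powr (\<alpha>+1)) q j
                 * qpoch (q powr (\<alpha>+1)) q k * qpoch q q m * q powr ((\<alpha>+1) * real m)))"
  shows "invertible_mat A \<and> A * B = 1\<^sub>m (n+1) \<and> B * A = 1\<^sub>m (n+1)"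
proof -
  define a where "a = q powr (\<alpha>+1)"
  define N where "N = n+1"
  have a0: "0 < a" using assms by (simp add: a_def)
  have a1: "a < 1"
  proof -
    have "ln q < 0" using assms by simp
    hence "(\<alpha>+1) * ln q < 0" using assms by (simp add: mult_pos_neg)
    thus ?thesis using assms by (simp add: a_def powr_def)
  qed
  have apow: "q powr ((\<alpha>+1) * real m) = a^m" for m
    using a0 by (simp add: a_def powr_powr[symmetric] powr_realpow)
  define U where "U = mat N N (\<lambda>(m,j). w q a m j)"
  define C where "C = mat N N (\<lambda>(m,l). if m = l then qpoch a q m / (qpoch q q m * a^m) else 0)"
  define D where "D = mat N N (\<lambda>(m,l). if m = l then a^m * qpoch q q m / qpoch a q m else 0)"
  have AN: "A = mat N N (\<lambda>(j,k). qpoch a q (j+k))" unfolding A_def a_def N_def ..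
  have carr: "A \<in> carrier_mat N N" "B \<in> carrier_mat N N" "U \<in> carrier_mat N N"
    "C \<in> carrier_mat N N" "D \<in> carrier_mat N N"
    by (simp_all add: AN B_def N_def U_def C_def D_def)
  have hB: "B = transpose_mat U * C * U"
  proof (rule eq_matI)
    fix j k assume jk: "j < dim_row (transpose_mat U * C * U)" "k < dim_col (transpose_mat U * C * U)"
    show "B $$ (j,k) = (transpose_mat U * C * U) $$ (j,k)"
    proof -
      have jk': "j < N" "k < N" using jk carr by auto
      have inner: "(\<Sum>ia\<in>{0..<N}. w q a ia j * (if ia = i then f ia else 0)) = w q a i j * f i"
        if "i < N" for i f
      proof -
        have "(\<Sum>ia\<in>{0..<N}. w q a ia j * (if ia = i then f ia else 0)) = (\<Sum>ia\<in>{0..<N}. if ia = i then w q a i j * f i else 0)"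
          by (rule sum.cong) auto
        thus ?thesis using that by simp
      qed
      have "(transpose_mat U * C * U) $$ (j,k) = (\<Sum>m\<in>{0..<N}. w q a m j * (qpoch a q m / (qpoch q q m * a^m)) * w q a m k)"
        using jk' by (simp add: U_def C_def scalar_prod_def inner)
      also have "\<dots> = B $$ (j,k)"
        using jk' unfolding B_def N_def
        apply (simp add: atLeastLessThanSuc_atLeastAtMost)
        apply (rule sum.cong[OF refl])
        apply (simp only: a_def[symmetric] apow w_def xq_def)
        using qpoch_pos[OF a0 a1 assms(1)] qpoch_pos[OF assms(1) assms(2) assms(1)] assms a0
        apply (simp add: field_simps power_add)
        done
      finally show ?thesis by simp
    qed
  qed (simp_all add: B_def U_def C_def N_def)
  have hD: "U * A * transpose_mat U = D"
  proof (rule eq_matI)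
    fix m l assume ml: "m < dim_row D" "l < dim_col D"
    hence ml': "m < N" "l < N" using carr by auto
    have "(U * A * transpose_mat U) $$ (m,l) = (\<Sum>k\<in>{0..<N}. (\<Sum>j\<in>{0..<N}. w q a m j * qpoch a q (j+k)) * w q a l k)"
      using ml' by (simp add: U_def AN scalar_prod_def)
    also have "\<dots> = D $$ (m,l)" using K[OF assms(1,2) a0 a1 ml'] ml' by (simp add: D_def)
    finally show "(U * A * transpose_mat U) $$ (m,l) = D $$ (m,l)" .
  qed (use carr in auto)
  have hDC: "D * C = 1\<^sub>m N"
  proof (rule eq_matI)
    fix m l assume ml: "m < dim_row (1\<^sub>m N :: real mat)" "l < dim_col (1\<^sub>m N :: real mat)"
    hence ml': "m < N" "l < N" by auto
    have "(D * C) $$ (m,l) = (\<Sum>p\<in>{0..<N}. (if m = p then a^m * qpoch q q m / qpoch a q m else 0) * (if p = l then qpoch a q p / (qpoch q q p * a^p) else 0))"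
      using ml' by (simp add: D_def C_def scalar_prod_def)
    also have "\<dots> = (\<Sum>p\<in>{0..<N}. if p = m then (if m = l then a^m * qpoch q q m / qpoch a q m * (qpoch a q m / (qpoch q q m * a^m)) else 0) else 0)"
      by (rule sum.cong) auto
    also have "\<dots> = (if m = l then 1 else 0)"
    proof -
      have "qpoch a q j \<noteq> 0" "qpoch q q j \<noteq> 0" for j
        using qpoch_pos[OF a0 a1 assms(1), of j] qpoch_pos[OF assms(1) assms(2) assms(1), of j] assms(2)
        by simp_all
      thus ?thesis using ml' a0 by simp
    qed
    finally show "(D * C) $$ (m,l) = 1\<^sub>m N $$ (m,l)" using ml' by simp
  qed (use carr in auto)
  have UT: "transpose_mat U \<in> carrier_mat N N" using carr by simp
  have AUT: "A * transpose_mat U \<in> carrier_mat N N" using carr(1) UT by (rule mult_carrier_mat)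
  have UA: "U * A \<in> carrier_mat N N" using carr(3) carr(1) by (rule mult_carrier_mat)
  have AUTC: "A * transpose_mat U * C \<in> carrier_mat N N" using AUT carr(4) by (rule mult_carrier_mat)
  have UTC: "transpose_mat U * C \<in> carrier_mat N N" using UT carr(4) by (rule mult_carrier_mat)
  have e1: "U * (A * transpose_mat U * C) = U * (A * transpose_mat U) * C"
    using assoc_mult_mat[OF carr(3) AUT carr(4)] by simp
  have e2: "U * (A * transpose_mat U) = U * A * transpose_mat U"
    using assoc_mult_mat[OF carr(3) carr(1) UT] by simp
  have "U * (A * transpose_mat U * C) = 1\<^sub>m N"
    unfolding e1 e2 hD hDC ..
  from mat_mult_left_right_inverse[OF carr(3) AUTC this]
  have i1: "(A * transpose_mat U * C) * U = 1\<^sub>m N" .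
  have e3: "A * transpose_mat U * C = A * (transpose_mat U * C)"
    using assoc_mult_mat[OF carr(1) UT carr(4)] .
  have e4: "A * (transpose_mat U * C) * U = A * (transpose_mat U * C * U)"
    using assoc_mult_mat[OF carr(1) UTC carr(3)] .
  have AB: "A * B = 1\<^sub>m N" using i1 unfolding e3 e4 hB[symmetric] .
  have BA: "B * A = 1\<^sub>m N" by (rule mat_mult_left_right_inverse[OF carr(1,2) AB])
  have "invertible_mat A"
    unfolding invertible_mat_def inverts_mat_def square_mat.simps
  proof (intro conjI exI)
    show "dim_col A = dim_row A" using carr(1) by simp
    show "A * B = 1\<^sub>m (dim_row A)" using AB carr(1) by simp
    show "B * A = 1\<^sub>m (dim_row B)" using BA carr(2) by simp
  qed
  thus ?thesis using AB BA by (simp add: N_def)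
qed

end
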